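(* Let $q\geq 3$ be an odd integer. Then the group $G_{1,q}=\langle a,b,s,t\mid [a,b],\ s^{-1}a^qs=ab,\ t^{-1}a^qt=ab^{-1}\rangle$ is not Hopfian.
   Context: A group is Hopfian if every surjective endomorphism of it is injective. *)

theory Defs
  imports "HOL-Algebra.Algebra"
begin

text \<open>A letter is a pair (g, e): e = True stands for the generator g, e = False for its
  inverse. Words are lists of letters.\<close>

type_synonym 'g word = "('g \<times> bool) list"

definition inv_letter :: "'g \<times> bool \<Rightarrow> 'g \<times> bool" where
  "inv_letter x = (fst x, \<not> snd x)"

definition inv_word :: "'g word \<Rightarrow> 'g word" where
  "inv_word w = rev (map inv_letter w)"

inductive_set pres_eq :: "'g word set \<Rightarrow> ('g word \<times> 'g word) set" for R where
  cancel: "(u @ [x, inv_letter x] @ w, u @ w) \<in> pres_eq R"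
| rel: "r \<in> R \<Longrightarrow> (u @ r @ w, u @ w) \<in> pres_eq R"
| refl: "(w, w) \<in> pres_eq R"
| sym: "(v, w) \<in> pres_eq R \<Longrightarrow> (w, v) \<in> pres_eq R"
| trans: "(u, v) \<in> pres_eq R \<Longrightarrow> (v, w) \<in> pres_eq R \<Longrightarrow> (u, w) \<in> pres_eq R"

definition presented_group :: "'g word set \<Rightarrow> 'g word set monoid" where
  "presented_group R =
     \<lparr> carrier = UNIV // pres_eq R,
       monoid.mult = (\<lambda>U V. (\<Union>x\<in>U. (\<Union>y\<in>V. pres_eq R `` {x @ y}))),
       monoid.one = (pres_eq R `` {[]}) \<rparr>"

definition hopfian :: "('a, 'b) monoid_scheme \<Rightarrow> bool" where
  "hopfian G \<longleftrightarrow>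
     (\<forall>h \<in> hom G G. h ` carrier G = carrier G \<longrightarrow> inj_on h (carrier G))"

datatype gen = gA | gB | gS | gT

abbreviation (input) ltr :: "gen \<Rightarrow> gen word" where "ltr g \<equiv> [(g, True)]"
abbreviation (input) ltr_inv :: "gen \<Rightarrow> gen word" where "ltr_inv g \<equiv> [(g, False)]"

definition G1q_relators :: "nat \<Rightarrow> gen word set" where
  "G1q_relators q =
     { ltr_inv gA @ ltr_inv gB @ ltr gA @ ltr gB,
       ltr_inv gS @ concat (replicate q (ltr gA)) @ ltr gS @ inv_word (ltr gA @ ltr gB),
       ltr_inv gT @ concat (replicate q (ltr gA)) @ ltr gT @ inv_word (ltr gA @ ltr_inv gB) }"

definition G1q :: "nat \<Rightarrow> gen word set monoid" where
  "G1q q = presented_group (G1q_relators q)"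

end

theory Submission
  imports Defs
begin

lemma pe_equiv: "equiv UNIV (pres_eq R)"
  unfolding equiv_def refl_on_def sym_def trans_def
  by (auto intro: pres_eq.refl pres_eq.sym pres_eq.trans)

lemma pe_cong: "(u, v) \<in> pres_eq R \<Longrightarrow> (x @ u @ y, x @ v @ y) \<in> pres_eq R"
proof (induction rule: pres_eq.induct)
  case (cancel u z w)
  show ?case using pres_eq.cancel[where R=R and u="x @ u" and x=z and w="w @ y"] by simp
next
  case (rel r u w)
  show ?case using pres_eq.rel[OF rel(1), where u="x @ u" and w="w @ y"] by simp
next
  case (refl w) then show ?case by (rule pres_eq.refl)
next
  case (sym v w) show ?case using sym.IH by (rule pres_eq.sym)
next
  case (trans u v w) show ?case using trans.IH by (rule pres_eq.trans)
qed

lemma pe_cong2: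
  assumes "(u, u') \<in> pres_eq R" "(v, v') \<in> pres_eq R"
  shows "(u @ v, u' @ v') \<in> pres_eq R"
proof -
  have "(u @ v, u' @ v) \<in> pres_eq R" using pe_cong[OF assms(1), of "[]" v] by simp
  moreover have "(u' @ v, u' @ v') \<in> pres_eq R" using pe_cong[OF assms(2), of u' "[]"] by simp
  ultimately show ?thesis by (rule pres_eq.trans)
qed

abbreviation cls :: "'g word set \<Rightarrow> 'g word \<Rightarrow> 'g word set" where
  "cls R w \<equiv> pres_eq R `` {w}"

lemma cls_eq_iff: "cls R u = cls R v \<longleftrightarrow> (u, v) \<in> pres_eq R"
  using eq_equiv_class_iff[OF pe_equiv, of u v R] by simp

lemma carrier_pg: "carrier (presented_group R) = range (cls R)"
proof -
  have "carrier (presented_group R) = UNIV // pres_eq R" unfolding presented_group_def by simp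
  also have "\<dots> = range (cls R)" unfolding quotient_def by blast
  finally show ?thesis .
qed

lemma mult_pg: "cls R u \<otimes>\<^bsub>presented_group R\<^esub> cls R v = cls R (u @ v)"
proof -
  have eq: "cls R (x @ y) = cls R (u @ v)" if "x \<in> cls R u" "y \<in> cls R v" for x y
  proof -
    have 1: "(u, x) \<in> pres_eq R" using that(1) by simp
    have 2: "(v, y) \<in> pres_eq R" using that(2) by simp
    have "(x @ y, u @ v) \<in> pres_eq R" by (rule pe_cong2[OF pres_eq.sym[OF 1] pres_eq.sym[OF 2]])
    then show ?thesis unfolding cls_eq_iff .
  qed
  have uv: "u \<in> cls R u" "v \<in> cls R v" by (simp_all add: pres_eq.refl)
  have "(\<Union>x\<in>cls R u. \<Union>y\<in>cls R v. cls R (x @ y)) = cls R (u @ v)"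
  proof (rule equalityI; rule subsetI)
    fix z assume "z \<in> (\<Union>x\<in>cls R u. \<Union>y\<in>cls R v. cls R (x @ y))"
    then obtain x y where "x \<in> cls R u" "y \<in> cls R v" "z \<in> cls R (x @ y)" by blast
    then show "z \<in> cls R (u @ v)" using eq by metis
  next
    fix z assume "z \<in> cls R (u @ v)"
    then show "z \<in> (\<Union>x\<in>cls R u. \<Union>y\<in>cls R v. cls R (x @ y))"
      using uv by blast
  qed
  then show ?thesis unfolding presented_group_def by simp
qed

lemma one_pg: "\<one>\<^bsub>presented_group R\<^esub> = cls R []"
  unfolding presented_group_def by simp

lemma inv_word_cancel: "(inv_word w @ w, []) \<in> pres_eq R"
proof (induction w)
  case Nil then show ?case by (simp add: inv_word_def pres_eq.refl)
next
  case (Cons x w)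
  have "inv_word (x # w) @ x # w = inv_word w @ [inv_letter x, x] @ w"
    by (simp add: inv_word_def)
  also have "inv_letter (inv_letter x) = x" by (simp add: inv_letter_def)
  then have "(inv_word w @ [inv_letter x, x] @ w, inv_word w @ w) \<in> pres_eq R"
    using pres_eq.cancel[where R=R and u="inv_word w" and x="inv_letter x" and w=w] by simp
  ultimately show ?case using Cons pres_eq.trans by metis
qed

lemma group_pg: "group (presented_group R)"
proof (rule groupI)
  fix x y assume "x \<in> carrier (presented_group R)" "y \<in> carrier (presented_group R)"
  then obtain u v where "x = cls R u" "y = cls R v" by (auto simp: carrier_pg)
  then show "x \<otimes>\<^bsub>presented_group R\<^esub> y \<in> carrier (presented_group R)"
    by (simp add: carrier_pg mult_pg)
next
  show "\<one>\<^bsub>presented_group R\<^esub> \<in> carrier (presented_group R)" by (simp add: carrier_pg one_pg)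
next
  fix x y z assume "x \<in> carrier (presented_group R)" "y \<in> carrier (presented_group R)"
    "z \<in> carrier (presented_group R)"
  then obtain u v w where "x = cls R u" "y = cls R v" "z = cls R w" by (auto simp: carrier_pg)
  then show "x \<otimes>\<^bsub>presented_group R\<^esub> y \<otimes>\<^bsub>presented_group R\<^esub> z =
      x \<otimes>\<^bsub>presented_group R\<^esub> (y \<otimes>\<^bsub>presented_group R\<^esub> z)"
    by (simp add: mult_pg)
next
  fix x assume "x \<in> carrier (presented_group R)"
  then obtain u where "x = cls R u" by (auto simp: carrier_pg)
  then show "\<one>\<^bsub>presented_group R\<^esub> \<otimes>\<^bsub>presented_group R\<^esub> x = x"
    by (simp add: mult_pg one_pg)
next
  fix x assume "x \<in> carrier (presented_group R)"
  then obtain w where w: "x = cls R w" by (auto simp: carrier_pg)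
  have "cls R (inv_word w) \<otimes>\<^bsub>presented_group R\<^esub> x = \<one>\<^bsub>presented_group R\<^esub>"
    unfolding w mult_pg one_pg cls_eq_iff by (rule inv_word_cancel)
  moreover have "cls R (inv_word w) \<in> carrier (presented_group R)" by (simp add: carrier_pg)
  ultimately show "\<exists>y\<in>carrier (presented_group R). y \<otimes>\<^bsub>presented_group R\<^esub> x = \<one>\<^bsub>presented_group R\<^esub>"
    by blast
qed

lemma inv_pg: "inv\<^bsub>presented_group R\<^esub> (cls R w) = cls R (inv_word w)"
proof (rule group.inv_equality[OF group_pg])
  show "cls R (inv_word w) \<otimes>\<^bsub>presented_group R\<^esub> cls R w = \<one>\<^bsub>presented_group R\<^esub>"
    unfolding mult_pg one_pg cls_eq_iff by (rule inv_word_cancel)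
qed (simp_all add: carrier_pg)

section \<open>Universal property\<close>

definition evw :: "('b, 'c) monoid_scheme \<Rightarrow> ('g \<Rightarrow> 'b) \<Rightarrow> 'g word \<Rightarrow> 'b" where
  "evw H f w = foldr (\<lambda>l acc. (if snd l then f (fst l) else inv\<^bsub>H\<^esub> (f (fst l))) \<otimes>\<^bsub>H\<^esub> acc) w \<one>\<^bsub>H\<^esub>"

lemma evw_Nil [simp]: "evw H f [] = \<one>\<^bsub>H\<^esub>"
  by (simp add: evw_def)

lemma evw_Cons [simp]:
  "evw H f (l # w) = (if snd l then f (fst l) else inv\<^bsub>H\<^esub> (f (fst l))) \<otimes>\<^bsub>H\<^esub> evw H f w"
  by (simp add: evw_def)

context group
begin

lemma evw_closed: "(\<And>g. f g \<in> carrier G) \<Longrightarrow> evw G f w \<in> carrier G"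
  by (induction w) auto

lemma evw_append: "(\<And>g. f g \<in> carrier G) \<Longrightarrow> evw G f (u @ v) = evw G f u \<otimes> evw G f v"
  by (induction u) (auto simp: m_assoc evw_closed)

lemma evw_pair: "(\<And>g. f g \<in> carrier G) \<Longrightarrow> evw G f [x, inv_letter x] = \<one>"
  by (cases x) (auto simp: inv_letter_def)

lemma evw_resp:
  assumes f: "\<And>g. f g \<in> carrier G" and rels: "\<And>r. r \<in> R \<Longrightarrow> evw G f r = \<one>"
  shows "(u, v) \<in> pres_eq R \<Longrightarrow> evw G f u = evw G f v"
proof (induction rule: pres_eq.induct)
  case (cancel u x w)
  have "evw G f (u @ [x, inv_letter x] @ w) = evw G f u \<otimes> (\<one> \<otimes> evw G f w)"
    by (simp only: evw_append[OF f] evw_pair[OF f])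
  also have "\<dots> = evw G f (u @ w)" by (simp add: evw_closed[OF f] evw_append[OF f])
  finally show ?case .
next
  case (rel r u w)
  have "evw G f (u @ r @ w) = evw G f u \<otimes> (\<one> \<otimes> evw G f w)"
    by (simp only: evw_append[OF f] rels[OF rel])
  also have "\<dots> = evw G f (u @ w)" by (simp add: evw_closed[OF f] evw_append[OF f])
  finally show ?case .
qed auto

lemma univ_hom:
  assumes f: "\<And>g. f g \<in> carrier G" and rels: "\<And>r. r \<in> R \<Longrightarrow> evw G f r = \<one>"
  defines "h \<equiv> \<lambda>U. evw G f (SOME w. w \<in> U)"
  shows "h \<in> hom (presented_group R) G" and "\<And>w. h (cls R w) = evw G f w"
proof -
  show hc: "h (cls R w) = evw G f w" for w
  proof -
    have "w \<in> cls R w" by (simp add: pres_eq.refl)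
    then have "(SOME x. x \<in> cls R w) \<in> cls R w" by (rule someI)
    then have "(w, SOME x. x \<in> cls R w) \<in> pres_eq R" by simp
    then show ?thesis unfolding h_def by (simp add: evw_resp[OF f rels])
  qed
  show "h \<in> hom (presented_group R) G"
    unfolding hom_def
  proof (intro CollectI conjI ballI funcsetI)
    fix x assume "x \<in> carrier (presented_group R)"
    then obtain w where "x = cls R w" by (auto simp: carrier_pg)
    then show "h x \<in> carrier G" by (simp add: hc evw_closed[OF f])
  next
    fix x y assume "x \<in> carrier (presented_group R)" "y \<in> carrier (presented_group R)"
    then obtain u v where "x = cls R u" "y = cls R v" by (auto simp: carrier_pg)
    then show "h (x \<otimes>\<^bsub>presented_group R\<^esub> y) = h x \<otimes> h y"
      by (simp add: hc mult_pg evw_append[OF f])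
  qed
qed

lemma conj_pow:
  assumes "x \<in> carrier G" "s \<in> carrier G"
  shows "inv s \<otimes> x [^] (n::nat) \<otimes> s = (inv s \<otimes> x \<otimes> s) [^] n"
proof (induction n)
  case 0 then show ?case using assms by simp
next
  case (Suc n)
  have c: "s \<otimes> (inv s \<otimes> (x \<otimes> s)) = x \<otimes> s"
    using assms by (simp add: m_assoc[symmetric])
  have "inv s \<otimes> x [^] Suc n \<otimes> s = (inv s \<otimes> x [^] n \<otimes> s) \<otimes> (inv s \<otimes> x \<otimes> s)"
    using assms by (simp add: m_assoc c)
  then show ?case using Suc assms by simp
qed

end

section \<open>A permutation model detecting the kernel element\<close>

definition Rf :: "rat \<Rightarrow> rat" where
  "Rf u = (if u \<in> \<int> then u + 1/2 else if u - 1/2 \<in> \<int> then u - 1/2 else u)"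

lemma small_Ints: "(x::rat) \<in> \<int> \<Longrightarrow> -1 < x \<Longrightarrow> x < 1 \<Longrightarrow> x = 0"
  by (elim Ints_cases) simp

lemma half_not_Int: "(1/2::rat) \<notin> \<int>"
  using small_Ints[of "1/2"] by auto

lemma Int_plus_half: "(u::rat) \<in> \<int> \<Longrightarrow> u + 1/2 \<notin> \<int>"
  using Ints_diff[of "u + 1/2" u] half_not_Int by auto

lemma Rf_Rf [simp]: "Rf (Rf u) = u"
proof (cases "u \<in> \<int>")
  case True
  then show ?thesis using Int_plus_half[OF True] by (simp add: Rf_def)
next
  case False
  show ?thesis
  proof (cases "u - 1/2 \<in> \<int>")
    case True
    then show ?thesis using False by (simp add: Rf_def)
  next
    case F2: False
    then show ?thesis using False by (simp add: Rf_def)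
  qed
qed

lemma Int_shift: "((u::rat) + 1 \<in> \<int>) = (u \<in> \<int>)"
  by (metis Ints_1 Ints_add Ints_diff add_diff_cancel)

lemma Rf_shift: "Rf (u + 1) = Rf u + 1"
proof -
  have "(u + 1 - 1/2 \<in> \<int>) = (u - 1/2 \<in> \<int>)"
    using Int_shift[of "u - 1/2"] by (simp add: algebra_simps)
  then show ?thesis by (simp add: Rf_def Int_shift)
qed

lemma Rf_shift': "Rf (u - 1) = Rf u - 1"
  using Rf_shift[of "u - 1"] by simp

fun lf :: "nat \<Rightarrow> gen \<times> bool \<Rightarrow> rat \<Rightarrow> rat" where
  "lf q (gA, True) = (\<lambda>u. u + 1)"
| "lf q (gA, False) = (\<lambda>u. u - 1)"
| "lf q (gB, e) = id"
| "lf q (gS, True) = (\<lambda>u. of_nat q * u)"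
| "lf q (gS, False) = (\<lambda>u. u / of_nat q)"
| "lf q (gT, True) = (\<lambda>u. of_nat q * Rf u)"
| "lf q (gT, False) = (\<lambda>u. Rf (u / of_nat q))"

definition evp :: "nat \<Rightarrow> gen word \<Rightarrow> rat \<Rightarrow> rat" where
  "evp q w = foldr (\<lambda>l acc. lf q l \<circ> acc) w id"

lemma evp_Nil [simp]: "evp q [] = id" by (simp add: evp_def)
lemma evp_Cons [simp]: "evp q (l # w) = lf q l \<circ> evp q w" by (simp add: evp_def)

lemma evp_append: "evp q (u @ v) = evp q u \<circ> evp q v"
  by (induction u) auto

lemma lf_inv: "q > 0 \<Longrightarrow> lf q x \<circ> lf q (inv_letter x) = id"
  by (cases x; rename_tac g e; case_tac g; case_tac e) (auto simp: inv_letter_def fun_eq_iff)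

lemma evp_powA: "evp q (replicate n (gA, True)) = (\<lambda>u. u + of_nat n)"
  by (induction n) (auto simp: fun_eq_iff)

lemma qdiv: "q > 0 \<Longrightarrow> (of_nat q * (y - 1) + of_nat q) / of_nat q = (y::rat)"
  by (simp add: algebra_simps)

lemma evp_rels:
  assumes "q > 0" "r \<in> G1q_relators q"
  shows "evp q r = id"
  using assms
  by (auto simp: G1q_relators_def evp_append evp_powA inv_word_def inv_letter_def fun_eq_iff
      Rf_shift Rf_shift' qdiv)

lemma evp_resp:
  assumes "q > 0"
  shows "(u, v) \<in> pres_eq (G1q_relators q) \<Longrightarrow> evp q u = evp q v"
proof (induction rule: pres_eq.induct)
  case (cancel u x w)
  have "evp q (u @ [x, inv_letter x] @ w) = evp q u \<circ> (lf q x \<circ> lf q (inv_letter x)) \<circ> evp q w"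
    by (simp add: evp_append o_assoc)
  then show ?case by (simp add: lf_inv[OF assms] evp_append)
next
  case (rel r u w)
  then show ?case by (simp add: evp_append evp_rels[OF assms])
qed auto

definition kw :: "gen word" where
  "kw = [(gS, False), (gA, True), (gS, True), (gT, False), (gA, True), (gT, True),
         (gS, False), (gA, False), (gS, True), (gT, False), (gA, False), (gT, True)]"

lemma Rf0: "Rf 0 = 1/2" by (simp add: Rf_def)

lemma notI_small: "-1 < (y::rat) \<Longrightarrow> y < 1 \<Longrightarrow> y \<noteq> 0 \<Longrightarrow> y \<notin> \<int>"
  using small_Ints by blast

lemma Rf_fix: "x \<notin> \<int> \<Longrightarrow> x - 1/2 \<notin> \<int> \<Longrightarrow> Rf x = x"
  by (simp add: Rf_def)

lemma evp_kw: assumes "q \<ge> 3" "odd q" shows "evp q kw 0 = 1/2"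
proof -
  define Q where "Q = rat_of_nat q"
  have Q3: "Q \<ge> 3" using assms(1) unfolding Q_def by simp
  have Q4: "Q \<noteq> 4"
  proof
    assume "Q = 4" then have "q = 4" unfolding Q_def by simp
    then show False using assms(2) by simp
  qed
  have Qp: "Q > 0" using Q3 by simp
  have A1: "Rf (1/2 - 1/Q) = 1/2 - 1/Q"
  proof (rule Rf_fix)
    have "1/Q \<le> 1/3" using Q3 by (simp add: divide_simps)
    moreover have "1/Q > 0" using Qp by simp
    ultimately show "1/2 - 1/Q \<notin> \<int>" "1/2 - 1/Q - 1/2 \<notin> \<int>"
      by (intro notI_small; linarith)+
  qed
  have A2: "Rf (1/2 - 2/Q) = 1/2 - 2/Q"
  proof (rule Rf_fix)
    have "2/Q \<le> 2/3" using Q3 by (simp add: divide_simps)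
    moreover have "2/Q > 0" using Qp by simp
    moreover have "2/Q \<noteq> 1/2" using Q4 Qp by (simp add: divide_simps)
    ultimately show "1/2 - 2/Q \<notin> \<int>" "1/2 - 2/Q - 1/2 \<notin> \<int>"
      by (intro notI_small; linarith)+
  qed
  have v12: "lf q (gT, True) 0 = Q/2" by (simp add: Rf0 Q_def)
  have v11: "lf q (gA, False) (Q/2) = Q/2 - 1" by simp
  have v10: "lf q (gT, False) (Q/2 - 1) = 1/2 - 1/Q"
  proof -
    have "(Q/2 - 1)/Q = 1/2 - 1/Q" using Qp by (simp add: field_simps)
    then show ?thesis using A1 by (simp add: Q_def)
  qed
  have v9: "lf q (gS, True) (1/2 - 1/Q) = Q/2 - 1" using Qp by (simp add: Q_def[symmetric] field_simps)
  have v8: "lf q (gA, False) (Q/2 - 1) = Q/2 - 2" by simp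
  have v7: "lf q (gS, False) (Q/2 - 2) = 1/2 - 2/Q" using Qp by (simp add: Q_def[symmetric] field_simps)
  have v6: "lf q (gT, True) (1/2 - 2/Q) = Q/2 - 2" using Qp A2 by (simp add: Q_def[symmetric] field_simps)
  have v5: "lf q (gA, True) (Q/2 - 2) = Q/2 - 1" by simp
  have v4: "lf q (gT, False) (Q/2 - 1) = 1/2 - 1/Q" by (rule v10)
  have v3: "lf q (gS, True) (1/2 - 1/Q) = Q/2 - 1" by (rule v9)
  have v2: "lf q (gA, True) (Q/2 - 1) = Q/2" by simp
  have v1: "lf q (gS, False) (Q/2) = 1/2" using Qp by (simp add: Q_def[symmetric] field_simps)
  show ?thesis
    unfolding kw_def evp_Cons evp_Nil o_apply id_apply
    by (simp only: v12 v11 v10 v9 v8 v7 v6 v5 v2 v1)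
qed

context group
begin

lemma rel_comm_iff:
  assumes "x \<in> carrier G" "y \<in> carrier G"
  shows "inv x \<otimes> (inv y \<otimes> (x \<otimes> y)) = \<one> \<longleftrightarrow> x \<otimes> y = y \<otimes> x"
proof -
  have "inv x \<otimes> (inv y \<otimes> (x \<otimes> y)) = inv (y \<otimes> x) \<otimes> (x \<otimes> y)"
    using assms by (simp add: inv_mult_group m_assoc)
  also have "\<dots> = \<one> \<longleftrightarrow> x \<otimes> y = y \<otimes> x"
    using assms inv_solve_left'[of "\<one>" "y \<otimes> x" "x \<otimes> y"] by auto
  finally show ?thesis .
qed

lemma rel_conj_iff:
  assumes "x \<in> carrier G" "y \<in> carrier G" "z \<in> carrier G" "s \<in> carrier G"
  shows "inv s \<otimes> (z \<otimes> (s \<otimes> (inv y \<otimes> inv x))) = \<one> \<longleftrightarrow> inv s \<otimes> z \<otimes> s = x \<otimes> y"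
proof -
  have "inv s \<otimes> (z \<otimes> (s \<otimes> (inv y \<otimes> inv x))) = (inv s \<otimes> z \<otimes> s) \<otimes> inv (x \<otimes> y)"
    using assms by (simp add: inv_mult_group m_assoc)
  also have "\<dots> = \<one> \<longleftrightarrow> inv s \<otimes> z \<otimes> s = x \<otimes> y"
    using assms inv_solve_right'[of "\<one>" "inv s \<otimes> z \<otimes> s" "x \<otimes> y"] by auto
  finally show ?thesis .
qed

lemma comm_inv_right:
  assumes "x \<in> carrier G" "y \<in> carrier G" "x \<otimes> y = y \<otimes> x"
  shows "x \<otimes> inv y = inv y \<otimes> x"
proof -
  have 1: "inv y \<otimes> (y \<otimes> x) \<otimes> inv y = x \<otimes> inv y" using assms(1,2) by (simp add: m_assoc[symmetric])
  have 2: "inv y \<otimes> (x \<otimes> y) \<otimes> inv y = inv y \<otimes> x" using assms(1,2) by (simp add: m_assoc)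
  show ?thesis using 1 2 assms(3) by metis
qed

lemma commutator_one:
  assumes "x \<in> carrier G" "y \<in> carrier G" "x \<otimes> y = y \<otimes> x"
  shows "x \<otimes> y \<otimes> inv x \<otimes> inv y = \<one>"
proof -
  have "x \<otimes> y \<otimes> inv x \<otimes> inv y = (x \<otimes> y) \<otimes> inv (y \<otimes> x)"
    using assms(1,2) by (simp add: inv_mult_group m_assoc)
  then show ?thesis using assms by simp
qed

lemma sub_pow: "subgroup H G \<Longrightarrow> x \<in> H \<Longrightarrow> x [^] (n::nat) \<in> H"
  by (induction n) (auto intro: subgroup.m_closed subgroup.one_closed)

lemma evw_rep: "(\<And>g. f g \<in> carrier G) \<Longrightarrow> evw G f (replicate n (g, True)) = f g [^] n"
  by (induction n) (auto, metis nat_pow_Suc nat_pow_Suc2)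

end

locale g1q = group G for G :: "gen word set monoid" (structure) +
  fixes q :: nat
  assumes G_def: "G = G1q q" and q_odd: "odd q" and q3: "3 \<le> q"
begin

abbreviation "RR \<equiv> G1q_relators q"
abbreviation "gens \<equiv> \<lambda>g. cls RR [(g, True)]"
abbreviation "ga \<equiv> gens gA"
abbreviation "gb \<equiv> gens gB"
abbreviation "gs \<equiv> gens gS"
abbreviation "gt \<equiv> gens gT"

lemma G_pg: "G = presented_group RR" using G_def by (simp add: G1q_def)

lemma carrier_G: "carrier G = range (cls RR)" using carrier_pg[of RR] G_pg by simp

lemma gens_closed [simp]: "gens g \<in> carrier G" by (simp add: carrier_G)

lemma cls_evw: "cls RR w = evw G gens w"
proof (induction w)
  case Nil then show ?case using one_pg[of RR] G_pg by simp
next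
  case (Cons x w)
  obtain g e where x: "x = (g, e)" by (cases x)
  have "cls RR (x # w) = cls RR [x] \<otimes> cls RR w" using mult_pg[of RR "[x]" w] G_pg by simp
  moreover have "cls RR [(g, False)] = inv (gens g)"
    using inv_pg[of RR "[(g, True)]"] G_pg by (simp add: inv_word_def inv_letter_def)
  ultimately show ?case using Cons x by (cases e) auto
qed

lemma cls_rel: "r \<in> RR \<Longrightarrow> cls RR r = \<one>"
proof -
  assume "r \<in> RR"
  then have "(r, []) \<in> pres_eq RR" using pres_eq.rel[of r RR "[]" "[]"] by simp
  then show ?thesis using one_pg[of RR] G_pg cls_eq_iff by metis
qed

lemma rel_words:
  "[(gA, False), (gB, False), (gA, True), (gB, True)] \<in> RR"
  "(gS, False) # replicate q (gA, True) @ [(gS, True), (gB, False), (gA, False)] \<in> RR"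
  "(gT, False) # replicate q (gA, True) @ [(gT, True), (gB, True), (gA, False)] \<in> RR"
  by (simp_all add: G1q_relators_def inv_word_def inv_letter_def)

lemma comm: "ga \<otimes> gb = gb \<otimes> ga"
proof -
  have "evw G gens [(gA, False), (gB, False), (gA, True), (gB, True)] = \<one>"
    by (subst cls_evw[symmetric]) (rule cls_rel[OF rel_words(1)])
  then have "inv ga \<otimes> (inv gb \<otimes> (ga \<otimes> gb)) = \<one>" by simp
  then show ?thesis using rel_comm_iff by simp
qed

lemma relS: "inv gs \<otimes> ga [^] q \<otimes> gs = ga \<otimes> gb"
proof -
  have "evw G gens ((gS, False) # replicate q (gA, True) @ [(gS, True), (gB, False), (gA, False)]) = \<one>"
    by (subst cls_evw[symmetric]) (rule cls_rel[OF rel_words(2)])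
  then have "inv gs \<otimes> (ga [^] q \<otimes> (gs \<otimes> (inv gb \<otimes> inv ga))) = \<one>"
    by (simp add: evw_append evw_rep)
  then show ?thesis using rel_conj_iff by simp
qed

lemma relT: "inv gt \<otimes> ga [^] q \<otimes> gt = ga \<otimes> inv gb"
proof -
  have "evw G gens ((gT, False) # replicate q (gA, True) @ [(gT, True), (gB, True), (gA, False)]) = \<one>"
    by (subst cls_evw[symmetric]) (rule cls_rel[OF rel_words(3)])
  then have "inv gt \<otimes> (ga [^] q \<otimes> (gt \<otimes> (inv (inv gb) \<otimes> inv ga))) = \<one>"
    by (simp add: evw_append evw_rep)
  then show ?thesis using rel_conj_iff[of ga "inv gb"] by simp
qed

definition fimg :: "gen \<Rightarrow> gen word set" where
  "fimg g = (case g of gA \<Rightarrow> ga [^] q | gB \<Rightarrow> gb [^] q | gS \<Rightarrow> gs | gT \<Rightarrow> gt)"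

lemma fimg_closed [simp]: "fimg g \<in> carrier G"
  by (cases g) (simp_all add: fimg_def)

lemma fimg_simps [simp]: "fimg gA = ga [^] q" "fimg gB = gb [^] q" "fimg gS = gs" "fimg gT = gt"
  by (simp_all add: fimg_def)

lemma powcomm: "ga [^] q \<otimes> gb [^] q = gb [^] q \<otimes> ga [^] q"
proof -
  have "ga [^] q \<otimes> gb = gb \<otimes> ga [^] q" using comm by (simp add: group_commutes_pow)
  then show ?thesis by (metis group_commutes_pow gens_closed nat_pow_closed)
qed

lemma comm_inv: "ga \<otimes> inv gb = inv gb \<otimes> ga"
  using comm_inv_right[OF gens_closed gens_closed comm] .

lemma fimg_rels: "r \<in> RR \<Longrightarrow> evw G fimg r = \<one>"
proof -
  assume "r \<in> RR"
  then consider "r = [(gA, False), (gB, False), (gA, True), (gB, True)]"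
    | "r = (gS, False) # replicate q (gA, True) @ [(gS, True), (gB, False), (gA, False)]"
    | "r = (gT, False) # replicate q (gA, True) @ [(gT, True), (gB, True), (gA, False)]"
    by (auto simp: G1q_relators_def inv_word_def inv_letter_def)
  then show ?thesis
  proof cases
    case 1
    then show ?thesis using rel_comm_iff[of "ga [^] q" "gb [^] q"] powcomm by simp
  next
    case 2
    have "inv gs \<otimes> (ga [^] q) [^] q \<otimes> gs = (ga \<otimes> gb) [^] q"
      using conj_pow[of "ga [^] q" gs q] relS by simp
    also have "\<dots> = ga [^] q \<otimes> gb [^] q" by (rule pow_mult_distrib[OF comm gens_closed gens_closed])
    finally have "inv gs \<otimes> (ga [^] q) [^] q \<otimes> gs = ga [^] q \<otimes> gb [^] q" .
    then show ?thesis using 2 rel_conj_iff[of "ga [^] q" "gb [^] q" "(ga [^] q) [^] q" gs]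
      by (simp add: evw_append evw_rep)
  next
    case 3
    have "inv gt \<otimes> (ga [^] q) [^] q \<otimes> gt = (ga \<otimes> inv gb) [^] q"
      using conj_pow[of "ga [^] q" gt q] relT by simp
    also have "\<dots> = ga [^] q \<otimes> inv (gb [^] q)"
      using pow_mult_distrib[OF comm_inv, of q] nat_pow_inv[of gb q] by simp
    finally have "inv gt \<otimes> (ga [^] q) [^] q \<otimes> gt = ga [^] q \<otimes> inv (gb [^] q)" .
    then show ?thesis using 3 rel_conj_iff[of "ga [^] q" "inv (gb [^] q)" "(ga [^] q) [^] q" gt]
      by (simp add: evw_append evw_rep)
  qed
qed

definition phi :: "gen word set \<Rightarrow> gen word set" where
  "phi = (\<lambda>U. evw G fimg (SOME w. w \<in> U))"

lemma phi_hom: "phi \<in> hom G G"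
  using univ_hom(1)[of fimg RR, OF fimg_closed fimg_rels] G_pg unfolding phi_def by simp

lemma phi_cls: "phi (cls RR w) = evw G fimg w"
  using univ_hom(2)[of fimg RR, OF fimg_closed fimg_rels] unfolding phi_def by simp

lemma phi_gens: "phi (gens g) = fimg g"
  using phi_cls[of "[(g, True)]"] by simp

lemma phi_group_hom: "group_hom G G phi"
  using phi_hom by (simp add: group_hom_def group_hom_axioms_def is_group)

lemma img_sub: "subgroup (phi ` carrier G) G"
  by (rule group_hom.img_is_subgroup[OF phi_group_hom])

lemma half_pow: "(x \<otimes> x) [^] m = x [^] (m + m)" if "x \<in> carrier G" for x and m :: nat
  using that by (simp add: pow_mult_distrib nat_pow_mult)

lemma phi_surj: "phi ` carrier G = carrier G"
proof
  show "phi ` carrier G \<subseteq> carrier G" using phi_hom by (auto simp: hom_def)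
next
  let ?I = "phi ` carrier G"
  have I: "subgroup ?I G" by (rule img_sub)
  have inI: "phi x \<in> ?I" if "x \<in> carrier G" for x using that by blast
  have sI: "gs \<in> ?I" and tI: "gt \<in> ?I" and aqI: "ga [^] q \<in> ?I" and bqI: "gb [^] q \<in> ?I"
    using inI[of gs] inI[of gt] inI[of ga] inI[of gb] by (simp_all add: phi_gens)
  have abI: "ga \<otimes> gb \<in> ?I"
    using relS subgroup.m_closed[OF I, OF subgroup.m_closed[OF I, OF subgroup.m_inv_closed[OF I sI] aqI] sI]
    by simp
  have abiI: "ga \<otimes> inv gb \<in> ?I"
    using relT subgroup.m_closed[OF I, OF subgroup.m_closed[OF I, OF subgroup.m_inv_closed[OF I tI] aqI] tI]
    by simp
  obtain m where qm: "q = m + m + 1" using q_odd by (metis oddE mult_2)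
  have aa: "(ga \<otimes> gb) \<otimes> (ga \<otimes> inv gb) = ga \<otimes> ga"
  proof -
    have "(ga \<otimes> gb) \<otimes> (ga \<otimes> inv gb) = ga \<otimes> (gb \<otimes> ga) \<otimes> inv gb" by (simp add: m_assoc)
    also have "\<dots> = ga \<otimes> (ga \<otimes> gb) \<otimes> inv gb" by (simp only: comm)
    also have "\<dots> = ga \<otimes> ga" by (simp add: m_assoc)
    finally show ?thesis .
  qed
  have bb: "inv (ga \<otimes> inv gb) \<otimes> (ga \<otimes> gb) = gb \<otimes> gb"
    by (simp add: inv_mult_group m_assoc[symmetric]) (simp add: m_assoc)
  have aaI: "ga \<otimes> ga \<in> ?I" using aa subgroup.m_closed[OF I abI abiI] by simp
  have bbI: "gb \<otimes> gb \<in> ?I"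
    using bb subgroup.m_closed[OF I subgroup.m_inv_closed[OF I abiI] abI] by simp
  have root: "x \<in> ?I" if "x \<in> carrier G" "x [^] q \<in> ?I" "x \<otimes> x \<in> ?I" for x
  proof -
    have "x [^] q = x [^] (m + m) \<otimes> x" using that(1) qm by (simp add: nat_pow_mult[symmetric])
    then have "x = inv ((x \<otimes> x) [^] m) \<otimes> x [^] q"
      using that(1) half_pow[of x m] by (simp add: m_assoc[symmetric])
    moreover have "inv ((x \<otimes> x) [^] m) \<otimes> x [^] q \<in> ?I"
      by (rule subgroup.m_closed[OF I subgroup.m_inv_closed[OF I sub_pow[OF I that(3)]] that(2)])
    ultimately show ?thesis by simp
  qed
  have aI: "ga \<in> ?I" using root[OF _ aqI aaI] by simp
  have bI: "gb \<in> ?I" using root[OF _ bqI bbI] by simp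
  have gI: "gens g \<in> ?I" for g using aI bI sI tI by (cases g) auto
  have "evw G gens w \<in> ?I" for w
  proof (induction w)
    case Nil then show ?case using subgroup.one_closed[OF I] by simp
  next
    case (Cons l w)
    have "(if snd l then gens (fst l) else inv (gens (fst l))) \<in> ?I"
      using gI subgroup.m_inv_closed[OF I gI] by simp
    then show ?case using subgroup.m_closed[OF I _ Cons] by simp
  qed
  note ev = this
  show "carrier G \<subseteq> ?I"
  proof
    fix x assume "x \<in> carrier G"
    then obtain w where "x = cls RR w" by (auto simp: carrier_G)
    then show "x \<in> ?I" using ev[of w] cls_evw[of w] by metis
  qed
qed

definition KK :: "gen word set" where
  "KK = (inv gs \<otimes> ga \<otimes> gs) \<otimes> (inv gt \<otimes> ga \<otimes> gt) \<otimes> inv (inv gs \<otimes> ga \<otimes> gs) \<otimes> inv (inv gt \<otimes> ga \<otimes> gt)"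

lemma KK_closed: "KK \<in> carrier G" by (simp add: KK_def)

lemma KK_cls: "KK = cls RR kw"
proof -
  have "cls RR kw = evw G gens kw" by (rule cls_evw)
  also have "\<dots> = KK" by (simp add: kw_def KK_def inv_mult_group m_assoc)
  finally show ?thesis by simp
qed

lemma KK_ne: "KK \<noteq> \<one>"
proof
  assume "KK = \<one>"
  then have "cls RR kw = cls RR []" using KK_cls one_pg[of RR] G_pg by simp
  then have "(kw, []) \<in> pres_eq RR" by (simp add: cls_eq_iff)
  then have "evp q kw = evp q []" using evp_resp[of q] q3 by simp
  then have "evp q kw 0 = 0" by simp
  then show False using evp_kw[OF q3 q_odd] by simp
qed

lemma phi_KK: "phi KK = \<one>"
proof -
  have hs: "phi (inv gs \<otimes> ga \<otimes> gs) = ga \<otimes> gb"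
    using phi_group_hom relS by (simp add: group_hom.hom_mult group_hom.hom_inv phi_gens)
  have ht: "phi (inv gt \<otimes> ga \<otimes> gt) = ga \<otimes> inv gb"
    using phi_group_hom relT by (simp add: group_hom.hom_mult group_hom.hom_inv phi_gens)
  have c: "(ga \<otimes> gb) \<otimes> (ga \<otimes> inv gb) = (ga \<otimes> inv gb) \<otimes> (ga \<otimes> gb)"
  proof -
    have "(ga \<otimes> gb) \<otimes> (ga \<otimes> inv gb) = ga \<otimes> (gb \<otimes> ga) \<otimes> inv gb" by (simp add: m_assoc)
    also have "\<dots> = ga \<otimes> (ga \<otimes> gb) \<otimes> inv gb" by (simp only: comm)
    also have "\<dots> = ga \<otimes> ga" by (simp add: m_assoc)
    finally have 1: "(ga \<otimes> gb) \<otimes> (ga \<otimes> inv gb) = ga \<otimes> ga" .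
    have "(ga \<otimes> inv gb) \<otimes> (ga \<otimes> gb) = ga \<otimes> (inv gb \<otimes> ga) \<otimes> gb" by (simp add: m_assoc)
    also have "\<dots> = ga \<otimes> (ga \<otimes> inv gb) \<otimes> gb" by (simp only: comm_inv)
    also have "\<dots> = ga \<otimes> ga" by (simp add: m_assoc)
    finally show ?thesis using 1 by simp
  qed
  have "phi KK = (ga \<otimes> gb) \<otimes> (ga \<otimes> inv gb) \<otimes> inv (ga \<otimes> gb) \<otimes> inv (ga \<otimes> inv gb)"
    unfolding KK_def using phi_group_hom hs ht by (simp add: group_hom.hom_mult group_hom.hom_inv)
  also have "\<dots> = \<one>" using c by (intro commutator_one) simp_all
  finally show ?thesis .
qed

lemma not_hopfian: "\<not> hopfian G"
proof -
  have "\<not> inj_on phi (carrier G)"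
  proof
    assume "inj_on phi (carrier G)"
    moreover have "phi KK = phi \<one>"
      using phi_KK group_hom.hom_one[OF phi_group_hom] by simp
    ultimately have "KK = \<one>" using KK_closed by (meson inj_onD one_closed)
    then show False using KK_ne by simp
  qed
  then show ?thesis unfolding hopfian_def using phi_hom phi_surj by blast
qed

end

theorem theorem3p1:
  fixes q :: nat
  assumes "odd q" and "q \<ge> 3"
  shows "group (G1q q) \<and> \<not> hopfian (G1q q)"
proof -
  have gr: "group (G1q q)" unfolding G1q_def by (rule group_pg)
  interpret g1q "G1q q" q
    by (rule g1q.intro[OF gr]) (unfold_locales, simp_all add: assms)
  show ?thesis using gr not_hopfian by simp
qed

end
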